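(* Let $P$ be a finite poset and $I\subseteq k[x_P]$ a monomial ideal. Then there is a poset filter $\mathcal{F}\subseteq\mathrm{Hom}(P,\mathbb{N})$ such that the set of monomials of $I$ equals $\{\overline{\Lambda}\phi:\phi\in\mathcal{F}\}$ if and only if $I$ is $P$-stable.
   Context: $\mathbb{N}=\{0,1,\dots\}$; $\mathrm{Hom}(P,\mathbb{N})$ is the set of isotone maps $P\to\mathbb{N}$ ordered pointwise. The ascent of $\phi$ is $\Lambda\phi=\{(p,i)\in P\times\mathbb{N}:\phi(q)\le i<\phi(p)\ \forall q<p\}$, and $\overline{\Lambda}\phi=\prod_{(p,i)\in\Lambda\phi}x_p\in k[x_P]$ ($k$ a field, $k[x_P]$ the polynomial ring in variables $x_p$, $p\in P$). For $b\in P$, a $b$-chain is a multichain $C: p_1\le\dots\le p_r$ in $P$ with $p_r\le b$; its length is $r$ and $m_C=\prod_{i=1}^r x_{p_i}$. $C$ is in a monomial $m$ if $m_C$ divides $m$; it is a longest $b$-chain in $m$ if no $b$-chain in $m$ is longer. $C$ goes through $a$ if $a\le b$ and $a$ is comparable to every $p_i$ (so $a$ can be inserted to give a longer multichain). For an antichain $B$, $m_B=\prod_{b\in B}x_b$. A monomial ideal $I\subseteq k[x_P]$ is $P$-stable if: whenever $m=n\,m_B\in I$ with $n$ a monomial and $B$ an antichain, and $a\in P$ is such that for every $b\in B$ some longest $b$-chain in $m$ goes through $a$, then $n\,x_a\in I$. *)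

theory Defs
  imports Main "HOL-Library.Multiset" "HOL-Library.Poly_Mapping"
begin

(* Monomials in the
variables x_p (p in P) are multisets over P (the free commutative monoid on P);
k[x_P] is the monoid algebra ('p multiset =>0 'k). *)

type_synonym ('p, 'k) mpoly = "'p multiset \<Rightarrow>\<^sub>0 'k"

definition mon :: "'p multiset \<Rightarrow> ('p, 'k::field) mpoly" where
  "mon m = Poly_Mapping.single m 1"

definition var :: "'p \<Rightarrow> ('p, 'k::field) mpoly" where
  "var p = mon {#p#}"

definition is_ideal :: "'r::comm_ring_1 set \<Rightarrow> bool" where
  "is_ideal I \<longleftrightarrow> 0 \<in> I \<and> (\<forall>a\<in>I. \<forall>b\<in>I. a + b \<in> I) \<and> (\<forall>a\<in>I. \<forall>r. r * a \<in> I)"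

definition ideal_gen :: "'r::comm_ring_1 set \<Rightarrow> 'r set" where
  "ideal_gen S = \<Inter>{J. is_ideal J \<and> S \<subseteq> J}"

definition monomial_ideal :: "('p, 'k::field) mpoly set \<Rightarrow> bool" where
  "monomial_ideal I \<longleftrightarrow> is_ideal I \<and> I = ideal_gen (I \<inter> range mon)"

definition Hom :: "('p::order \<Rightarrow> nat) set" where
  "Hom = {\<phi>. mono \<phi>}"

definition hom_filter :: "('p::order \<Rightarrow> nat) set \<Rightarrow> bool" where
  "hom_filter F \<longleftrightarrow> F \<subseteq> Hom \<and> (\<forall>\<phi>\<in>F. \<forall>\<psi>\<in>Hom. \<phi> \<le> \<psi> \<longrightarrow> \<psi> \<in> F)"

definition ascent :: "('p::order \<Rightarrow> nat) \<Rightarrow> ('p \<times> nat) set" where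
  "ascent \<phi> = {(p, i). (\<forall>q. q < p \<longrightarrow> \<phi> q \<le> i) \<and> i < \<phi> p}"

definition ascent_poly :: "('p::order \<Rightarrow> nat) \<Rightarrow> ('p, 'k::field) mpoly" where
  "ascent_poly \<phi> = (\<Prod>(p, i)\<in>ascent \<phi>. var p)"

(* b-chains (multichains p_1 \<le> ... \<le> p_r with p_r \<le> b), as lists;
m_C = mset C, and "C is in m" means m_C divides m, i.e. mset C \<subseteq># m. *)
definition b_chain :: "'p::order \<Rightarrow> 'p list \<Rightarrow> bool" where
  "b_chain b C \<longleftrightarrow> sorted_wrt (\<le>) C \<and> (C \<noteq> [] \<longrightarrow> last C \<le> b)"

definition chain_in :: "'p list \<Rightarrow> 'p multiset \<Rightarrow> bool" where
  "chain_in C m \<longleftrightarrow> mset C \<subseteq># m"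

definition longest_b_chain :: "'p::order \<Rightarrow> 'p multiset \<Rightarrow> 'p list \<Rightarrow> bool" where
  "longest_b_chain b m C \<longleftrightarrow> b_chain b C \<and> chain_in C m \<and>
     (\<forall>C'. b_chain b C' \<and> chain_in C' m \<longrightarrow> length C' \<le> length C)"

definition goes_through :: "'p::order \<Rightarrow> 'p \<Rightarrow> 'p list \<Rightarrow> bool" where
  "goes_through a b C \<longleftrightarrow> a \<le> b \<and> (\<forall>p\<in>set C. a \<le> p \<or> p \<le> a)"

definition antichain_set :: "'p::order set \<Rightarrow> bool" where
  "antichain_set B \<longleftrightarrow> (\<forall>x\<in>B. \<forall>y\<in>B. x \<le> y \<longrightarrow> x = y)"

definition P_stable :: "('p::{finite,order}, 'k::field) mpoly set \<Rightarrow> bool" where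
  "P_stable I \<longleftrightarrow> (\<forall>m n B a. mon m \<in> I \<and> m = n + mset_set B \<and> antichain_set B \<and>
      (\<forall>b\<in>B. \<exists>C. longest_b_chain b m C \<and> goes_through a b C)
      \<longrightarrow> mon (n + {#a#}) \<in> I)"

end

theory Submission
  imports Defs
begin

lemma mon_mult: "(mon a :: ('p,'k::field) mpoly) * mon b = mon (a + b)"
  by (simp add: mon_def mult_single)

lemma mon_zero: "(mon {#} :: ('p,'k::field) mpoly) = 1"
  by (simp add: mon_def)

lemma mon_inj: "(mon a :: ('p,'k::field) mpoly) = mon b \<Longrightarrow> a = b"
  unfolding mon_def by (metis lookup_single_eq lookup_single_not_eq zero_neq_one)

lemma var_pow: "(var p :: ('p,'k::field) mpoly) ^ k = mon (replicate_mset k p)"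
  by (induct k) (auto simp: var_def mon_zero mon_mult add.commute)

lemma mon_sum: "finite A \<Longrightarrow> (\<Prod>x\<in>A. (mon (f x) :: ('p,'k::field) mpoly)) = mon (\<Sum>x\<in>A. f x)"
  by (induct A rule: finite_induct) (auto simp: mon_zero mon_mult)

definition Mx :: "('p::{finite,order} \<Rightarrow> nat) \<Rightarrow> 'p \<Rightarrow> nat" where
  "Mx \<phi> p = Max (insert 0 (\<phi> ` {q. q < p}))"

definition asc :: "('p::{finite,order} \<Rightarrow> nat) \<Rightarrow> 'p multiset" where
  "asc \<phi> = (\<Sum>p\<in>UNIV. replicate_mset (\<phi> p - Mx \<phi> p) p)"

lemma count_asc: "count (asc \<phi>) x = \<phi> x - Mx \<phi> x"
proof -
  have "count (asc \<phi>) x = (\<Sum>p\<in>UNIV. count (replicate_mset (\<phi> p - Mx \<phi> p) p) x)"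
    by (simp add: asc_def count_sum)
  also have "\<dots> = (\<Sum>p\<in>UNIV. if p = x then \<phi> x - Mx \<phi> x else 0)"
    by (rule sum.cong) auto
  finally show ?thesis by simp
qed

lemma Mx_ge: "q < p \<Longrightarrow> \<phi> q \<le> Mx \<phi> p"
  unfolding Mx_def by (rule Max_ge) auto

lemma Mx_le_iff: "Mx \<phi> p \<le> i \<longleftrightarrow> (\<forall>q. q < p \<longrightarrow> \<phi> q \<le> i)"
  unfolding Mx_def by (subst Max_le_iff) auto

lemma Mx_cases: "Mx \<phi> p = 0 \<or> (\<exists>q<p. Mx \<phi> p = \<phi> q)"
proof -
  have "Mx \<phi> p \<in> insert 0 (\<phi> ` {q. q < p})" unfolding Mx_def by (rule Max_in) auto
  thus ?thesis by auto
qed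

lemma Mx_mono_le: "mono \<phi> \<Longrightarrow> Mx \<phi> p \<le> \<phi> p"
  by (auto simp: Mx_le_iff mono_def)

lemma ascent_eq: "ascent \<phi> = Sigma UNIV (\<lambda>p. {Mx \<phi> p..<\<phi> p})"
  by (auto simp: ascent_def Mx_le_iff)

lemma ascent_poly_eq: "(ascent_poly \<phi> :: ('p::{finite,order},'k::field) mpoly) = mon (asc \<phi>)"
proof -
  have "(ascent_poly \<phi> :: ('p,'k) mpoly) = (\<Prod>p\<in>UNIV. \<Prod>i\<in>{Mx \<phi> p..<\<phi> p}. var p)"
    unfolding ascent_poly_def ascent_eq by (subst prod.Sigma) auto
  also have "\<dots> = (\<Prod>p\<in>UNIV. mon (replicate_mset (\<phi> p - Mx \<phi> p) p))"
    by (simp add: var_pow)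
  also have "\<dots> = mon (asc \<phi>)" by (simp add: mon_sum asc_def)
  finally show ?thesis .
qed

lemma sorted_le_last: "sorted_wrt (\<le>) C \<Longrightarrow> x \<in> set C \<Longrightarrow> x \<le> (last C :: 'a::order)"
proof (induct C)
  case (Cons y ys) thus ?case by (cases ys) (auto intro: order_trans)
qed simp

lemma b_chain_iff: "b_chain b C \<longleftrightarrow> sorted_wrt (\<le>) C \<and> (\<forall>x\<in>set C. x \<le> b)"
  unfolding b_chain_def
  by (metis last_in_set order_trans sorted_le_last empty_iff list.set(1))

lemma sorted_rep: "sorted_wrt (\<le>) (replicate k (p::'a::order))"
  by (induct k) auto

definition phi :: "'p::{finite,order} multiset \<Rightarrow> 'p \<Rightarrow> nat" where
  "phi m p = Max {length C | C. b_chain p C \<and> chain_in C m}"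

lemma chain_len_le: "chain_in C m \<Longrightarrow> length C \<le> size m"
  unfolding chain_in_def by (metis size_mset size_mset_mono)

lemma phi_fin: "finite {length C | C. b_chain p C \<and> chain_in C m}"
  by (rule finite_subset[of _ "{..size m}"]) (auto dest: chain_len_le)

lemma phi_ge: "b_chain p C \<Longrightarrow> chain_in C m \<Longrightarrow> length C \<le> phi m p"
  unfolding phi_def by (rule Max_ge[OF phi_fin]) auto

lemma phi_ex: "\<exists>C. b_chain p C \<and> chain_in C m \<and> length C = phi m p"
proof -
  have "b_chain p [] \<and> chain_in [] m" by (simp add: b_chain_def chain_in_def)
  hence "phi m p \<in> {length C | C. b_chain p C \<and> chain_in C m}"
    unfolding phi_def by (intro Max_in[OF phi_fin]) blast
  thus ?thesis by auto
qed

lemma phi_mono: fixes m :: "'p::{finite,order} multiset" shows "mono (phi m)"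
proof
  fix p p' :: 'p assume "p \<le> p'"
  obtain C where C: "b_chain p C" "chain_in C m" "length C = phi m p" using phi_ex by blast
  have "b_chain p' C" using C(1) \<open>p \<le> p'\<close> by (auto simp: b_chain_iff intro: order_trans)
  thus "phi m p \<le> phi m p'" using C phi_ge by metis
qed

lemma phi_rec: "phi m p = count m p + Mx (phi m) p"
proof (rule antisym)
  obtain C where C: "b_chain p C" "chain_in C m" "length C = phi m p" using phi_ex by blast
  define C1 where "C1 = filter (\<lambda>x. x \<noteq> p) C"
  define C2 where "C2 = filter (\<lambda>x. x = p) C"
  have len: "length C = length C1 + length C2"
    unfolding C1_def C2_def using sum_length_filter_compl[of "\<lambda>x. x = p" C] by simp
  have "length C2 = count (mset C) p" unfolding C2_def by (induct C) auto
  also have "\<dots> \<le> count m p" using C(2) unfolding chain_in_def mset_replicate subseteq_mset_def by simp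
  finally have l2: "length C2 \<le> count m p" .
  have s1: "sorted_wrt (\<le>) C1" using C(1) by (simp add: b_chain_iff C1_def sorted_wrt_filter)
  have i1: "chain_in C1 m" using C(2) unfolding chain_in_def C1_def
    by (metis mset_filter multiset_filter_subset subset_mset.order_trans)
  have l1: "length C1 \<le> Mx (phi m) p"
  proof (cases "C1 = []")
    case False
    let ?q = "last C1"
    have "?q \<in> set C1" using False by simp
    hence "?q < p" using C(1) by (auto simp: C1_def b_chain_iff)
    have "b_chain ?q C1" using s1 False by (simp add: b_chain_def)
    hence "length C1 \<le> phi m ?q" using i1 phi_ge by blast
    also have "\<dots> \<le> Mx (phi m) p" using Mx_ge \<open>?q < p\<close> by blast
    finally show ?thesis .
  qed simp
  show "phi m p \<le> count m p + Mx (phi m) p" using len l1 l2 C(3) by linarith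
next
  have "Mx (phi m) p \<le> phi m p - count m p \<and> count m p \<le> phi m p"
  proof (cases "Mx (phi m) p = 0")
    case True
    have "b_chain p (replicate (count m p) p)" by (auto simp: b_chain_iff sorted_rep)
    moreover have "chain_in (replicate (count m p) p) m" unfolding chain_in_def mset_replicate subseteq_mset_def by simp
    ultimately have "count m p \<le> phi m p" using phi_ge by fastforce
    thus ?thesis using True by simp
  next
    case False
    then obtain q where q: "q < p" "Mx (phi m) p = phi m q" using Mx_cases[of "phi m" p] by auto
    obtain C where C: "b_chain q C" "chain_in C m" "length C = phi m q" using phi_ex by blast
    let ?D = "C @ replicate (count m p) p"
    have lt: "\<forall>x\<in>set C. x < p" using C(1) q(1) by (auto simp: b_chain_iff intro: order_le_less_trans)
    have "b_chain p ?D" using C(1) lt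
      by (auto simp: b_chain_iff sorted_wrt_append sorted_rep less_imp_le)
    moreover have "chain_in ?D m"
    proof -
      have "count (mset C) p = 0" using lt by (auto simp: count_mset_0_iff)
      moreover have "\<forall>x. count (mset C) x \<le> count m x" using C(2) by (simp add: chain_in_def mset_subset_eq_count)
      ultimately have "\<forall>x. count (mset ?D) x \<le> count m x" by auto
      thus ?thesis unfolding chain_in_def subseteq_mset_def by (metis count_union count_replicate_mset mset_append mset_replicate)
    qed
    ultimately have "length ?D \<le> phi m p" using phi_ge by blast
    thus ?thesis using q C(3) by simp
  qed
  thus "count m p + Mx (phi m) p \<le> phi m p" by linarith
qed

lemma asc_phi: "asc (phi m) = m"
  by (rule multiset_eqI) (simp add: count_asc phi_rec[of m])

lemma phi_asc: "mono \<phi> \<Longrightarrow> phi (asc \<phi>) = \<phi>"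
proof
  fix p assume mo: "mono \<phi>"
  show "phi (asc \<phi>) p = \<phi> p"
  proof (induct p rule: measure_induct_rule[of "\<lambda>p. card {q. q < p}"])
    case (less p)
    have "\<And>q. q < p \<Longrightarrow> phi (asc \<phi>) q = \<phi> q"
      by (rule less) (auto intro!: psubset_card_mono dest: order.strict_trans)
    hence "Mx (phi (asc \<phi>)) p = Mx \<phi> p" unfolding Mx_def
      by (metis (mono_tags, lifting) image_cong mem_Collect_eq)
    thus ?case using phi_rec[of "asc \<phi>" p] Mx_mono_le[OF mo, of p] by (simp add: count_asc)
  qed
qed

definition upclosed :: "('p::{finite,order}, 'k::field) mpoly set \<Rightarrow> bool" where
  "upclosed I \<longleftrightarrow> (\<forall>m m'. mon m \<in> I \<and> phi m \<le> phi m' \<longrightarrow> mon m' \<in> I)"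

lemma lhs_iff:
  fixes I :: "('p::{finite,order}, 'k::field) mpoly set"
  shows "(\<exists>F. hom_filter F \<and> {f \<in> I. f \<in> range mon} = ascent_poly ` F) \<longleftrightarrow> upclosed I"
proof
  assume "\<exists>F. hom_filter F \<and> {f \<in> I. f \<in> range mon} = ascent_poly ` F"
  then obtain F where F: "hom_filter F" "{f \<in> I. f \<in> range mon} = ascent_poly ` F" by blast
  show "upclosed I" unfolding upclosed_def
  proof (intro allI impI, elim conjE)
    fix m m' assume m: "mon m \<in> I" and le: "phi m \<le> phi m'"
    have "(mon m :: ('p,'k) mpoly) \<in> ascent_poly ` F" using F(2) m by blast
    then obtain \<phi> where \<phi>: "\<phi> \<in> F" "(mon m :: ('p,'k) mpoly) = ascent_poly \<phi>" by blast
    have "\<phi> \<in> Hom" using F(1) \<phi>(1) by (auto simp: hom_filter_def)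
    hence mo: "mono \<phi>" by (simp add: Hom_def)
    have "m = asc \<phi>" using \<phi>(2) by (simp add: ascent_poly_eq mon_inj)
    hence "\<phi> = phi m" using phi_asc[OF mo] by simp
    moreover have "phi m' \<in> Hom" using phi_mono by (simp add: Hom_def)
    ultimately have "phi m' \<in> F" using F(1) \<phi>(1) le by (auto simp: hom_filter_def)
    hence "(ascent_poly (phi m') :: ('p,'k) mpoly) \<in> {f \<in> I. f \<in> range mon}" using F(2) by blast
    thus "mon m' \<in> I" by (simp add: ascent_poly_eq asc_phi)
  qed
next
  assume U: "upclosed I"
  define F where "F = {\<phi> \<in> Hom. (mon (asc \<phi>) :: ('p,'k) mpoly) \<in> I}"
  have "hom_filter F" unfolding hom_filter_def
  proof (intro conjI ballI impI)
    show "F \<subseteq> Hom" by (auto simp: F_def)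
    fix \<phi> \<psi> assume a: "\<phi> \<in> F" "\<psi> \<in> Hom" "\<phi> \<le> \<psi>"
    have "phi (asc \<phi>) \<le> phi (asc \<psi>)" using a by (simp add: F_def Hom_def phi_asc)
    thus "\<psi> \<in> F" using U a by (auto simp: F_def upclosed_def)
  qed
  moreover have "{f \<in> I. f \<in> range mon} = ascent_poly ` F"
  proof
    show "{f \<in> I. f \<in> range mon} \<subseteq> ascent_poly ` F"
    proof
      fix f assume "f \<in> {f \<in> I. f \<in> range mon}"
      then obtain m where m: "f = mon m" "mon m \<in> I" by auto
      have "phi m \<in> F" using m phi_mono by (simp add: F_def Hom_def asc_phi)
      moreover have "f = (ascent_poly (phi m) :: ('p,'k) mpoly)" by (simp add: ascent_poly_eq asc_phi m)
      ultimately show "f \<in> ascent_poly ` F" by blast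
    qed
    show "ascent_poly ` F \<subseteq> {f \<in> I. f \<in> range mon}"
      by (auto simp: F_def ascent_poly_eq)
  qed
  ultimately show "\<exists>F. hom_filter F \<and> {f \<in> I. f \<in> range mon} = ascent_poly ` F" by blast
qed

lemma sort_comparable:
  fixes M :: "'a::order multiset"
  shows "(\<forall>x\<in>#M. \<forall>y\<in>#M. x \<le> y \<or> y \<le> x) \<Longrightarrow> \<exists>ys. mset ys = M \<and> sorted_wrt (\<le>) ys"
proof (induct M)
  case empty thus ?case by simp
next
  case (add x M)
  then obtain ys where ys: "mset ys = M" "sorted_wrt (\<le>) ys" by auto
  have comp: "\<forall>y\<in>set ys. x \<le> y \<or> y \<le> x" using add(2) ys(1) by auto
  let ?zs = "filter (\<lambda>y. \<not> x \<le> y) ys @ x # filter (\<lambda>y. x \<le> y) ys"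
  have "mset ?zs = add_mset x M"
    using ys(1) by (simp add: add.commute)
  moreover have "sorted_wrt (\<le>) ?zs"
    using ys(2) comp by (auto simp: sorted_wrt_append sorted_wrt_filter intro: order_trans)
  ultimately show ?case by blast
qed

lemma sorted_comp: "sorted_wrt (\<le>) C \<Longrightarrow> x \<in> set C \<Longrightarrow> y \<in> set C \<Longrightarrow> x \<le> y \<or> y \<le> (x::'a::order)"
  by (induct C) auto

lemma cms: "count (mset_set (B::'p::finite set)) x = (if x \<in> B then 1 else 0)"
  by simp

lemma count_filter_list: "count (mset (filter P xs)) x = (if P x then count (mset xs) x else 0)"
  by simp

lemma chain_in_count: "chain_in C m \<longleftrightarrow> (\<forall>x. count (mset C) x \<le> count m x)"
  by (simp add: chain_in_def subseteq_mset_def)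

lemma up_stable:
  fixes I :: "('p::{finite,order}, 'k::field) mpoly set"
  assumes U: "upclosed I"
  shows "P_stable I"
  unfolding P_stable_def
proof (intro allI impI, elim conjE)
  fix m n B a
  assume mI: "mon m \<in> I" and mn: "m = n + mset_set B" and ac: "antichain_set B"
    and H: "\<forall>b\<in>B. \<exists>C. longest_b_chain b m C \<and> goes_through a b C"
  have cm: "\<And>x. count m x = count n x + (if x \<in> B then 1 else 0)" using mn by simp
  have acB: "\<And>x y. x \<in> B \<Longrightarrow> y \<in> B \<Longrightarrow> x \<le> y \<Longrightarrow> x = y" using ac by (auto simp: antichain_set_def)
  have "phi m \<le> phi (n + {#a#})"
  proof (rule le_funI)
    fix p
    obtain C where C: "b_chain p C" "chain_in C m" "length C = phi m p" using phi_ex by blast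
    have Cs: "sorted_wrt (\<le>) C" and Cle: "\<forall>x\<in>set C. x \<le> p" using C(1) by (auto simp: b_chain_iff)
    have Ccnt: "\<And>x. count (mset C) x \<le> count m x" using C(2) by (simp add: chain_in_count)
    have "\<exists>E. b_chain p E \<and> chain_in E (n + {#a#}) \<and> length C \<le> length E"
    proof (cases "\<forall>x. count (mset C) x \<le> count n x")
      case True
      hence "chain_in C (n + {#a#})" by (auto simp: chain_in_count intro: le_trans)
      thus ?thesis using C(1) by blast
    next
      case False
      then obtain b where b: "count (mset C) b > count n b" by (auto simp: not_le)
      have bB: "b \<in> B" using b Ccnt[of b] cm[of b] by (auto split: if_splits)
      have cCb: "count (mset C) b = count m b" using b Ccnt[of b] cm[of b] bB by auto
      have bC: "b \<in> set C" using b by (metis count_mset_0_iff less_zeroE)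
      have bp: "b \<le> p" using Cle bC by blast
      obtain D where D: "longest_b_chain b m D" "goes_through a b D" using H bB by blast
      have Db: "b_chain b D" and Dm: "chain_in D m"
        and Dl: "\<And>C'. b_chain b C' \<Longrightarrow> chain_in C' m \<Longrightarrow> length C' \<le> length D"
        using D(1) by (auto simp: longest_b_chain_def)
      have Ds: "sorted_wrt (\<le>) D" and Dle: "\<forall>x\<in>set D. x \<le> b" using Db by (auto simp: b_chain_iff)
      have ab: "a \<le> b" and Da: "\<forall>x\<in>set D. a \<le> x \<or> x \<le> a" using D(2) by (auto simp: goes_through_def)
      have Dcnt: "\<And>x. count (mset D) x \<le> count m x" using Dm by (simp add: chain_in_count)
      have cDb: "count (mset D) b = count m b"
      proof (rule ccontr)
        assume "count (mset D) b \<noteq> count m b"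
        hence lt: "count (mset D) b < count m b" using Dcnt[of b] by simp
        have "b_chain b (D @ [b])" using Ds Dle by (auto simp: b_chain_iff sorted_wrt_append)
        moreover have "chain_in (D @ [b]) m" using lt Dcnt by (auto simp: chain_in_count)
        ultimately have "length (D @ [b]) \<le> length D" by (rule Dl)
        thus False by simp
      qed
      have bD: "b \<in># mset D" using cDb cCb b by (metis count_greater_zero_iff gr_zeroI less_zeroE)
      define M1 where "M1 = mset D - {#b#} + {#a#}"
      have M1set: "\<forall>x\<in>#M1. x = a \<or> x \<in> set D" unfolding M1_def by (auto dest: in_diffD)
      have "\<forall>x\<in>#M1. \<forall>y\<in>#M1. x \<le> y \<or> y \<le> x"
      proof (intro ballI)
        fix x y assume "x \<in># M1" "y \<in># M1"
        hence "x = a \<or> x \<in> set D" "y = a \<or> y \<in> set D" using M1set by auto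
        thus "x \<le> y \<or> y \<le> x" using Da sorted_comp[OF Ds] by auto
      qed
      then obtain E1 where E1: "mset E1 = M1" "sorted_wrt (\<le>) E1" using sort_comparable by blast
      have E1le: "\<forall>x\<in>set E1. x \<le> b" using M1set E1(1) Dle ab by (metis set_mset_mset)
      define C1 where "C1 = filter (\<lambda>x. \<not> b < x) C"
      define C2 where "C2 = filter (\<lambda>x. b < x) C"
      have lenC: "length C = length C2 + length C1"
        unfolding C1_def C2_def by (rule sum_length_filter_compl[symmetric])
      have "b_chain b C1"
        using Cs sorted_comp[OF Cs _ bC] unfolding C1_def b_chain_iff
        by (auto simp: sorted_wrt_filter le_less)
      moreover have "chain_in C1 m" using Ccnt by (auto simp: chain_in_count C1_def intro: le_trans)
      ultimately have lC1: "length C1 \<le> length D" by (rule Dl)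
      define E where "E = E1 @ C2"
      have "length E = size M1 + length C2" by (simp add: E_def E1(1)[symmetric])
      moreover have "size M1 = length D" unfolding M1_def using bD by (cases D) (auto simp: size_Diff_singleton)
      ultimately have lenE: "length C \<le> length E" using lenC lC1 by simp
      have "b_chain p E" unfolding E_def b_chain_iff
      proof (intro conjI ballI)
        show "sorted_wrt (\<le>) (E1 @ C2)" using E1(2) Cs E1le
          by (auto simp: C2_def sorted_wrt_append sorted_wrt_filter intro: order_trans less_imp_le)
        fix x assume "x \<in> set (E1 @ C2)"
        thus "x \<le> p" using E1le Cle bp by (auto simp: C2_def intro: order_trans)
      qed
      moreover have "chain_in E (n + {#a#})" unfolding chain_in_count
      proof
        fix x
        have cE: "count (mset E) x = count (mset D) x - (if x = b then 1 else 0) + (if x = a then 1 else 0)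
             + (if b < x then count (mset C) x else 0)"
          by (simp add: E_def E1(1) M1_def C2_def)
        show "count (mset E) x \<le> count (n + {#a#}) x"
        proof (cases "b < x")
          case True
          have "x \<notin> set D" using True Dle by (auto simp: less_le_not_le)
          hence "count (mset D) x = 0" by simp
          moreover have "x \<notin> B" using True acB bB by (auto simp: less_le)
          ultimately show ?thesis using cE True Ccnt[of x] cm[of x] by (simp del: count_mset_0_iff)
        next
          case False
          have "count (mset D) x - (if x = b then 1 else 0) \<le> count n x"
          proof (cases "x = b")
            case True thus ?thesis using cDb cm[of b] bB by simp
          next
            case xb: False
            show ?thesis
            proof (cases "x \<in> B")
              case True
              have "x \<notin> set D" using acB[OF True bB] Dle xb by auto
              hence "count (mset D) x = 0" by (metis count_mset_0_iff)
              thus ?thesis using xb by (simp del: count_mset_0_iff)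
            next
              case False thus ?thesis using Dcnt[of x] cm[of x] by simp
            qed
          qed
          thus ?thesis using cE False by simp
        qed
      qed
      ultimately show ?thesis using lenE by blast
    qed
    then obtain E where "b_chain p E" "chain_in E (n + {#a#})" "length C \<le> length E" by blast
    thus "phi m p \<le> phi (n + {#a#}) p" using C(3) phi_ge by fastforce
  qed
  thus "mon (n + {#a#}) \<in> I" using U mI by (auto simp: upclosed_def)
qed

lemma Mx_upd_notabove: "\<not> a < x \<Longrightarrow> Mx (\<phi>(a := v)) x = Mx \<phi> x"
  unfolding Mx_def by (rule arg_cong[where f="\<lambda>S. Max (insert 0 S)"]) auto

lemma step:
  fixes I :: "('p::{finite,order}, 'k::field) mpoly set"
  assumes PS: "P_stable I" and mo: "mono \<phi>" and mI: "mon (asc \<phi>) \<in> I"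
    and up: "\<forall>b. a < b \<longrightarrow> \<phi> a < \<phi> b"
  shows "mon (asc (\<phi>(a := Suc (\<phi> a)))) \<in> I"
proof -
  define m where "m = asc \<phi>"
  have pm: "phi m = \<phi>" using phi_asc[OF mo] by (simp add: m_def)
  define B where "B = {b. a < b \<and> Mx \<phi> b = \<phi> a}"
  define n where "n = m - mset_set B"
  have cm: "\<And>x. count m x = \<phi> x - Mx \<phi> x" by (simp add: m_def count_asc)
  have "mset_set B \<subseteq># m" unfolding subseteq_mset_def
  proof
    fix x show "count (mset_set B) x \<le> count m x"
      using up cm[of x] unfolding cms by (auto simp: B_def)
  qed
  hence mn: "m = n + mset_set B" by (simp add: n_def)
  have ac: "antichain_set B" unfolding antichain_set_def
  proof (intro ballI impI)
    fix b1 b2 assume b: "b1 \<in> B" "b2 \<in> B" "b1 \<le> b2"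
    show "b1 = b2"
    proof (rule ccontr)
      assume "b1 \<noteq> b2"
      hence "b1 < b2" using b(3) by simp
      hence "\<phi> b1 \<le> Mx \<phi> b2" by (rule Mx_ge)
      moreover have "\<phi> a < \<phi> b1" using up b(1) by (auto simp: B_def)
      ultimately show False using b(2) by (auto simp: B_def)
    qed
  qed
  have ch: "\<forall>b\<in>B. \<exists>C. longest_b_chain b m C \<and> goes_through a b C"
  proof
    fix b assume bB: "b \<in> B"
    hence ab: "a < b" and Mb: "Mx \<phi> b = \<phi> a" by (auto simp: B_def)
    obtain Ca where Ca: "b_chain a Ca" "chain_in Ca m" "length Ca = phi m a" using phi_ex by blast
    let ?C = "Ca @ replicate (count m b) b"
    have lt: "\<forall>x\<in>set Ca. x < b" using Ca(1) ab by (auto simp: b_chain_iff intro: order_le_less_trans)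
    have bc: "b_chain b ?C" using Ca(1) lt
      by (auto simp: b_chain_iff sorted_wrt_append sorted_rep less_imp_le)
    have ci: "chain_in ?C m"
    proof -
      have "count (mset Ca) b = 0" using lt by (auto simp: count_mset_0_iff)
      moreover have "\<forall>x. count (mset Ca) x \<le> count m x" using Ca(2) by (simp add: chain_in_count)
      ultimately have "\<forall>x. count (mset ?C) x \<le> count m x" by auto
      thus ?thesis by (simp add: chain_in_count)
    qed
    have "length ?C = \<phi> b" using Ca(3) pm cm[of b] Mb Mx_mono_le[OF mo, of b] by simp
    hence "longest_b_chain b m ?C" using bc ci phi_ge[of b _ m] pm
      by (auto simp: longest_b_chain_def)
    moreover have "goes_through a b ?C" using Ca(1) ab
      by (auto simp: goes_through_def b_chain_iff less_imp_le)
    ultimately show "\<exists>C. longest_b_chain b m C \<and> goes_through a b C" by blast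
  qed
  have I1: "mon (n + {#a#}) \<in> I"
    using PS mI mn ac ch unfolding P_stable_def m_def by blast
  have "n + {#a#} = asc (\<phi>(a := Suc (\<phi> a)))"
  proof (rule multiset_eqI)
    fix x
    let ?\<psi> = "\<phi>(a := Suc (\<phi> a))"
    have cn: "count (n + {#a#}) x = \<phi> x - Mx \<phi> x - (if x \<in> B then 1 else 0) + (if x = a then 1 else 0)"
      by (simp add: n_def cm)
    show "count (n + {#a#}) x = count (asc ?\<psi>) x"
    proof (cases "a < x")
      case False
      hence "Mx ?\<psi> x = Mx \<phi> x" by (rule Mx_upd_notabove)
      moreover have "x \<notin> B" using False by (simp add: B_def)
      ultimately show ?thesis using cn Mx_mono_le[OF mo, of a] by (simp add: count_asc Suc_diff_le)
    next
      case True
      hence xa: "x \<noteq> a" by auto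
      have ge: "\<phi> a \<le> Mx \<phi> x" using True by (rule Mx_ge)
      show ?thesis
      proof (cases "x \<in> B")
        case xB: True
        have "Mx ?\<psi> x = Suc (\<phi> a)"
        proof (rule antisym)
          show "Mx ?\<psi> x \<le> Suc (\<phi> a)" unfolding Mx_le_iff
            using xB Mx_ge[of _ x \<phi>] by (auto simp: B_def) (metis le_SucI)
          show "Suc (\<phi> a) \<le> Mx ?\<psi> x" using Mx_ge[OF True, of ?\<psi>] by simp
        qed
        thus ?thesis using cn xB xa by (simp add: count_asc B_def)
      next
        case xB: False
        hence gt: "\<phi> a < Mx \<phi> x" using ge True by (auto simp: B_def)
        have "Mx ?\<psi> x = Mx \<phi> x"
        proof (rule antisym)
          show "Mx ?\<psi> x \<le> Mx \<phi> x" unfolding Mx_le_iff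
            using gt Mx_ge[of _ x \<phi>] by auto
          obtain q where q: "q < x" "Mx \<phi> x = \<phi> q" using Mx_cases[of \<phi> x] gt by auto
          have "q \<noteq> a" using q gt by auto
          thus "Mx \<phi> x \<le> Mx ?\<psi> x" using Mx_ge[OF q(1), of ?\<psi>] q by simp
        qed
        thus ?thesis using cn xB xa by (simp add: count_asc)
      qed
    qed
  qed
  thus ?thesis using I1 by simp
qed

lemma stable_aux:
  fixes I :: "('p::{finite,order}, 'k::field) mpoly set"
  assumes PS: "P_stable I" and mpsi: "mono \<psi>"
  shows "\<forall>\<phi>. mono \<phi> \<longrightarrow> \<phi> \<le> \<psi> \<longrightarrow> (\<Sum>p\<in>UNIV. \<psi> p - \<phi> p) = k \<longrightarrow> mon (asc \<phi>) \<in> I \<longrightarrow> mon (asc \<psi>) \<in> I"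
proof (induct k)
  case 0
  show ?case
  proof (intro allI impI)
    fix \<phi> :: "'p \<Rightarrow> nat" assume a: "mono \<phi>" "\<phi> \<le> \<psi>" "(\<Sum>p\<in>UNIV. \<psi> p - \<phi> p) = 0" "mon (asc \<phi>) \<in> I"
    have "\<psi> = \<phi>"
    proof
      fix p have "\<psi> p - \<phi> p = 0" using a(3) by simp
      thus "\<psi> p = \<phi> p" using a(2) le_funD[OF a(2), of p] by simp
    qed
    thus "mon (asc \<psi>) \<in> I" using a(4) by simp
  qed
next
  case (Suc k)
  show ?case
  proof (intro allI impI)
    fix \<phi> :: "'p \<Rightarrow> nat" assume a: "mono \<phi>" "\<phi> \<le> \<psi>" "(\<Sum>p\<in>UNIV. \<psi> p - \<phi> p) = Suc k" "mon (asc \<phi>) \<in> I"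
    have le: "\<And>p. \<phi> p \<le> \<psi> p" using a(2) by (simp add: le_fun_def)
    define S where "S = {p. \<phi> p < \<psi> p}"
    have "S \<noteq> {}"
    proof
      assume "S = {}"
      hence "\<And>p. \<psi> p - \<phi> p = 0" by (auto simp: S_def not_less)
      thus False using a(3) by simp
    qed
    then obtain c where c: "c \<in> S" "\<forall>b\<in>S. c \<le> b \<longrightarrow> c = b"
      using finite_has_maximal[of S] by auto
    have eqab: "\<phi> b = \<psi> b" if "c < b" for b
    proof -
      have "b \<notin> S" using c(2) that by auto
      thus ?thesis using le[of b] by (auto simp: S_def)
    qed
    have up: "\<forall>b. c < b \<longrightarrow> \<phi> c < \<phi> b"
    proof (intro allI impI)
      fix b assume "c < b"
      hence "\<psi> c \<le> \<psi> b" using mpsi by (auto simp: mono_def)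
      thus "\<phi> c < \<phi> b" using eqab[OF \<open>c < b\<close>] c(1) by (simp add: S_def)
    qed
    define \<phi>' where "\<phi>' = \<phi>(c := Suc (\<phi> c))"
    have I': "mon (asc \<phi>') \<in> I" unfolding \<phi>'_def by (rule step[OF PS a(1) a(4) up])
    have mo': "mono \<phi>'"
    proof (rule monoI)
      fix x y :: 'p assume xy: "x \<le> y"
      show "\<phi>' x \<le> \<phi>' y"
      proof (cases "x = y")
        case False
        hence "x < y" using xy by simp
        show ?thesis
        proof (cases "x = c")
          case True thus ?thesis using up \<open>x < y\<close> False by (auto simp: \<phi>'_def)
        next
          case xc: False
          have "\<phi> x \<le> \<phi> y" using a(1) xy by (auto simp: mono_def)
          thus ?thesis using xc by (auto simp: \<phi>'_def)
        qed
      qed simp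
    qed
    have le': "\<phi>' \<le> \<psi>" using le c(1) by (auto simp: le_fun_def \<phi>'_def S_def Suc_le_eq)
    have "(\<Sum>p\<in>UNIV. \<psi> p - \<phi> p) = (\<Sum>p\<in>UNIV. (\<psi> p - \<phi>' p) + (if p = c then 1 else 0))"
      by (rule sum.cong) (use c(1) in \<open>auto simp: \<phi>'_def S_def\<close>)
    also have "\<dots> = (\<Sum>p\<in>UNIV. \<psi> p - \<phi>' p) + 1" by (simp add: sum.distrib)
    finally have "(\<Sum>p\<in>UNIV. \<psi> p - \<phi>' p) = k" using a(3) by simp
    thus "mon (asc \<psi>) \<in> I" using Suc[rule_format, OF mo' le' _ I'] by blast
  qed
qed

lemma stable_up:
  fixes I :: "('p::{finite,order}, 'k::field) mpoly set"
  assumes PS: "P_stable I"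
  shows "upclosed I"
  unfolding upclosed_def
proof (intro allI impI, elim conjE)
  fix m m' assume "mon m \<in> I" "phi m \<le> phi m'"
  thus "mon m' \<in> I"
    using stable_aux[OF PS phi_mono[of m'], rule_format, of "phi m"] phi_mono[of m] by (simp add: asc_phi)
qed

theorem proposition3p11:
  fixes I :: "('p::{finite,order}, 'k::field) mpoly set"
  assumes "monomial_ideal I"
  shows "(\<exists>F. hom_filter F \<and> {f \<in> I. f \<in> range mon} = ascent_poly ` F) \<longleftrightarrow> P_stable I"
  using lhs_iff[of I] up_stable[of I] stable_up[of I] by blast

end
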